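(* (1) If $\#A\ge3$, the constant $2$ in Proposition 9 is optimal: for every $c<2$ there exist probabilities $p,q$ on $A$ with $p\ne q$ such that $\mathbb P[g(U,p)\ne g(U,q)]>c\|p-q\|$, where $U$ is uniform on $S$. (2) Let $N=\#A\ge2$ and let $(Z_p)_p$ be a family of random variables defined on a common probability space, indexed by the probabilities $p$ on $A$, such that each $Z_p$ has law $p$. Then there exist two probabilities $p\ne q$ on $A$ such that $$\mathbb P[Z_p\ne Z_q]\ge 2\Big(1-\frac1N\Big)\|p-q\|.$$
   Context: $A$ finite with a fixed total order; $(E_a)_{a\in A}$ canonical basis of $\mathbb R^A$; $H=\{x\in\mathbb R^A:\sum_ax_a=1\}$; $S=(\mathbb R_+)^A\cap H$ with its uniform law. For a probability $p$ on $A$: $G(p)=\sum_ap(a)E_a$; $S_a(p)=\mathrm{Conv}(\{G(p)\}\cup\{E_b:b\ne a\})$; $g(s,p)=\min\{a:s\in S_a(p)\}$. $\|p-q\|=\frac12\sum_a|p(a)-q(a)|$. Proposition 9 states $\mathbb P[g(U,p)\ne g(U,q)]\le2\|p-q\|$ for all $p,q$. *)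

theory Defs
  imports "HOL-Probability.Probability"
begin

text \<open>A is the finite, totally ordered type 'a. Points of R^A are vectors of type real^'a.\<close>

definition is_prob :: "('a::finite \<Rightarrow> real) \<Rightarrow> bool" where
  "is_prob p \<longleftrightarrow> (\<forall>a. 0 \<le> p a) \<and> (\<Sum>a\<in>UNIV. p a) = 1"

definition tv_dist :: "('a::finite \<Rightarrow> real) \<Rightarrow> ('a \<Rightarrow> real) \<Rightarrow> real" where
  "tv_dist p q = (1/2) * (\<Sum>a\<in>UNIV. \<bar>p a - q a\<bar>)"

definition E :: "'a::finite \<Rightarrow> (real, 'a) vec" where
  "E a = axis a 1"

definition G :: "('a::finite \<Rightarrow> real) \<Rightarrow> (real, 'a) vec" where
  "G p = (\<chi> a. p a)"

definition Sa :: "'a::finite \<Rightarrow> ('a \<Rightarrow> real) \<Rightarrow> (real^'a) set" where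
  "Sa a p = convex hull (insert (G p) {E b | b. b \<noteq> a})"

definition g :: "real^('a::{finite,linorder}) \<Rightarrow> ('a \<Rightarrow> real) \<Rightarrow> 'a" where
  "g s p = (LEAST a. s \<in> Sa a p)"

text \<open>Uniform law on the simplex S: (N-1)-dimensional Lebesgue measure on the hyperplane H,
  realised through the affine chart which forgets the coordinate a0 (the least element of A);
  all such charts induce proportional measures, so the normalised law does not depend on it.\<close>

definition a0 :: "'a::{finite,linorder}" where
  "a0 = Min UNIV"

definition chart_dom :: "('a::{finite,linorder} \<Rightarrow> real) measure" where
  "chart_dom = PiM (UNIV - {a0}) (\<lambda>_. lborel)"

definition chart_simplex :: "('a::{finite,linorder} \<Rightarrow> real) set" where
  "chart_simplex = {y \<in> space chart_dom. (\<forall>b\<in>UNIV - {a0}. 0 \<le> y b) \<and> (\<Sum>b\<in>UNIV - {a0}. y b) \<le> 1}"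

definition lift :: "('a::{finite,linorder} \<Rightarrow> real) \<Rightarrow> (real, 'a) vec" where
  "lift y = (\<chi> a. if a = a0 then 1 - (\<Sum>b\<in>UNIV - {a0}. y b) else y a)"

definition unifS :: "(real^('a::{finite,linorder})) measure" where
  "unifS = distr (uniform_measure chart_dom chart_simplex) borel lift"

end

theory Submission
  imports Defs
begin


lemma comb_pairs:
  fixes f :: "'a::finite \<Rightarrow> 'a"
  assumes nf: "\<And>a. f a \<noteq> a"
  shows "2 * (CARD('a) - 1) \<le> card {(a,b). f a \<noteq> f b}"
proof -
  obtain u :: 'a where True by blast
  define v where "v = f u"
  have fv: "f v \<noteq> f u" using nf[of v] by (simp add: v_def)
  define h where "h w = (if f w \<noteq> f u then u else v)" for w
  have hd: "f w \<noteq> f (h w)" for w using fv by (auto simp: h_def)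
  let ?U = "UNIV - {u}"
  define S1 where "S1 = (\<lambda>w. (w, h w)) ` ?U"
  define S2 where "S2 = (\<lambda>w. (h w, w)) ` ?U"
  have c1: "card S1 = CARD('a) - 1" unfolding S1_def
    by (subst card_image) (auto intro: inj_onI)
  have c2: "card S2 = CARD('a) - 1" unfolding S2_def
    by (subst card_image) (auto intro: inj_onI)
  have hu: "h w = u \<or> h w = v" for w by (auto simp: h_def)
  have hv: "h v = u" using fv by (auto simp: h_def)
  have disj: "S1 \<inter> S2 = {}"
  proof (rule ccontr)
    assume "S1 \<inter> S2 \<noteq> {}"
    then obtain w w' where w: "w \<noteq> u" "w' \<noteq> u" "w = h w'" "h w = w'"
      unfolding S1_def S2_def by auto
    then have "w = v" using hu[of w'] by auto
    then show False using w hv by auto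
  qed
  have sub: "S1 \<union> S2 \<subseteq> {(a,b). f a \<noteq> f b}"
    unfolding S1_def S2_def using hd by (auto simp: eq_commute)
  have "card (S1 \<union> S2) = 2 * (CARD('a) - 1)"
    using disj c1 c2 by (subst card_Un_disjoint) auto
  moreover have "card (S1 \<union> S2) \<le> card {(a,b). f a \<noteq> f b}"
    by (rule card_mono[OF _ sub]) simp
  ultimately show ?thesis by simp
qed




lemma part2:
  fixes M :: "'b measure" and Z :: "('a::finite \<Rightarrow> real) \<Rightarrow> 'b \<Rightarrow> 'a"
  assumes N: "CARD('a) \<ge> 2" and ps: "prob_space M"
    and hyp: "\<forall>p. is_prob p \<longrightarrow> Z p \<in> measurable M (count_space UNIV) \<and>
                     (\<forall>a. measure M {\<omega> \<in> space M. Z p \<omega> = a} = p a)"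
  shows "\<exists>p q. is_prob p \<and> is_prob q \<and> p \<noteq> q \<and>
                     measure M {\<omega> \<in> space M. Z p \<omega> \<noteq> Z q \<omega>}
                       \<ge> 2 * (1 - 1 / real CARD('a)) * tv_dist p q"
proof -
  interpret prob_space M by (rule ps)
  define n where "n = real CARD('a)"
  have n2: "n \<ge> 2" using N by (simp add: n_def)
  define pa where "pa a x = (if x = a then 0 else 1/(n-1))" for a x :: 'a
  have sumif: "(\<Sum>x\<in>UNIV. if x = a then (0::real) else c) = (n - 1) * c" for a :: 'a and c
  proof -
    have "(\<Sum>x\<in>UNIV. if x = a then (0::real) else c) = (\<Sum>x\<in>UNIV - {a}. c)"
      by (subst sum.If_cases) (auto simp: Compl_eq_Diff_UNIV)
    also have "\<dots> = (n - 1) * c" by (simp add: n_def card_Diff_singleton)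
    finally show ?thesis .
  qed
  have isp: "is_prob (pa a)" for a
    unfolding is_prob_def pa_def using n2 by (auto simp: sumif)
  define X where "X a = Z (pa a)" for a
  have Xm: "X a \<in> measurable M (count_space UNIV)" for a using hyp isp X_def by auto
  have Xl: "measure M {\<omega> \<in> space M. X a \<omega> = a} = 0" for a
    using hyp isp[of a] by (auto simp: X_def pa_def)
  have setm: "{\<omega> \<in> space M. X a \<omega> = c} \<in> sets M" for a c
  proof -
    have "X a -` {c} \<inter> space M \<in> sets M" by (rule measurable_sets[OF Xm]) auto
    then show ?thesis by (simp add: vimage_def Int_def conj_commute)
  qed
  have setm2: "{\<omega> \<in> space M. X a \<omega> \<noteq> X b \<omega>} \<in> sets M" for a b
  proof -
    have "{\<omega> \<in> space M. X a \<omega> \<noteq> X b \<omega>} = (\<Union>c. {\<omega> \<in> space M. X a \<omega> = c} \<inter> (space M - {\<omega> \<in> space M. X b \<omega> = c}))"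
      by auto
    also have "\<dots> \<in> sets M" using setm by auto
    finally show ?thesis .
  qed
  have AEne: "AE \<omega> in M. \<forall>a. X a \<omega> \<noteq> a"
  proof -
    have "AE \<omega> in M. \<omega> \<notin> {\<omega> \<in> space M. X a \<omega> = a}" for a
      using prob_eq_0[OF setm[of a a]] Xl[of a] by simp
    then have "\<forall>a. AE \<omega> in M. X a \<omega> \<noteq> a" by (auto elim: AE_mp)
    then show ?thesis by (simp add: AE_all_countable)
  qed
  define Off where "Off = {(a,b). (a::'a) \<noteq> b}"
  define D where "D ab = {\<omega> \<in> space M. X (fst ab) \<omega> \<noteq> X (snd ab) \<omega>}" for ab
  have key: "\<exists>a b. a \<noteq> b \<and> measure M {\<omega> \<in> space M. X a \<omega> \<noteq> X b \<omega>} \<ge> 2 / n"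
  proof (rule ccontr)
    assume "\<not> ?thesis"
    then have lt: "\<And>ab. ab \<in> Off \<Longrightarrow> measure M (D ab) < 2 / n"
      by (force simp: Off_def D_def)
    have cOff: "card Off = CARD('a) * CARD('a) - CARD('a)"
    proof -
      have "Off = UNIV - {(a,b). a = b}" by (auto simp: Off_def)
      moreover have "{(a,b). (a::'a) = b} = (\<lambda>a. (a,a)) ` UNIV" by auto
      moreover have "card ((\<lambda>a::'a. (a,a)) ` UNIV) = CARD('a)" by (subst card_image) (auto intro: inj_onI)
      moreover have "card (UNIV::('a\<times>'a) set) = CARD('a)*CARD('a)"
        by (metis UNIV_Times_UNIV card_cartesian_product)
      ultimately show ?thesis by (simp add: card_Diff_subset)
    qed
    have Offne: "Off \<noteq> {}"
    proof -
      have "\<exists>a b::'a. a \<noteq> b"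
      proof (rule ccontr)
        assume "\<not> (\<exists>a b::'a. a \<noteq> b)"
        then have "card (UNIV::'a set) \<le> Suc 0" by (subst card_le_Suc0_iff_eq) auto
        then show False using N by simp
      qed
      then show ?thesis by (auto simp: Off_def)
    qed
    have "(\<Sum>ab\<in>Off. measure M (D ab)) < (\<Sum>ab\<in>Off. 2 / n)"
      by (rule sum_strict_mono) (use lt Offne in auto)
    also have "\<dots> = (n * n - n) * (2 / n)"
      using cOff N by (simp add: n_def of_nat_diff)
    also have "\<dots> = 2 * (n - 1)" using n2 by (simp add: field_simps)
    finally have up: "(\<Sum>ab\<in>Off. measure M (D ab)) < 2 * (n - 1)" .
    have intg: "integrable M (indicator (D ab) :: 'b \<Rightarrow> real)" for ab
      unfolding D_def by (intro integrable_real_indicator setm2) (simp add: less_top[symmetric])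
    have "(\<Sum>ab\<in>Off. measure M (D ab)) = (\<Sum>ab\<in>Off. integral\<^sup>L M (indicator (D ab)))"
      using setm2 by (simp add: D_def)
    also have "\<dots> = integral\<^sup>L M (\<lambda>\<omega>. \<Sum>ab\<in>Off. indicator (D ab) \<omega>)"
      by (rule sym, rule Bochner_Integration.integral_sum, rule intg)
    finally have eqs: "(\<Sum>ab\<in>Off. measure M (D ab)) = integral\<^sup>L M (\<lambda>\<omega>. \<Sum>ab\<in>Off. indicator (D ab) \<omega>)" .
    have "AE \<omega> in M. 2 * (n - 1) \<le> (\<Sum>ab\<in>Off. indicator (D ab) \<omega> :: real)"
      using AEne
    proof (rule AE_mp, intro AE_I2 impI)
      fix \<omega> assume om: "\<omega> \<in> space M" and ne: "\<forall>a. X a \<omega> \<noteq> a"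
      have "(\<Sum>ab\<in>Off. indicator (D ab) \<omega> :: real) = real (card {ab \<in> Off. \<omega> \<in> D ab})"
      proof -
        have "(\<Sum>ab\<in>Off. indicator (D ab) \<omega> :: real) = (\<Sum>ab\<in>Off. indicator {ab. \<omega> \<in> D ab} ab)"
          by (intro sum.cong) (auto simp: indicator_def)
        also have "\<dots> = real (card (Off \<inter> {ab. \<omega> \<in> D ab}))"
        proof -
          have "real (card (Off \<inter> {ab. \<omega> \<in> D ab})) = (\<Sum>x\<in>Off \<inter> {ab. \<omega> \<in> D ab}. 1)" by simp
          also have "\<dots> = (\<Sum>x\<in>Off. if x \<in> {ab. \<omega> \<in> D ab} then 1 else 0)"
            by (rule sum.inter_restrict) simp
          finally show ?thesis by (simp add: indicator_def)
        qed
        finally show ?thesis by (simp add: Int_def)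
      qed
      also have "{ab \<in> Off. \<omega> \<in> D ab} = {(a,b). X a \<omega> \<noteq> X b \<omega>}"
        using om by (auto simp: Off_def D_def)
      finally have e: "(\<Sum>ab\<in>Off. indicator (D ab) \<omega> :: real) = real (card {(a,b). X a \<omega> \<noteq> X b \<omega>})" .
      have "2 * (CARD('a) - 1) \<le> card {(a,b). X a \<omega> \<noteq> X b \<omega>}"
        using comb_pairs[of "\<lambda>a. X a \<omega>"] ne by auto
      then have "real (2 * (CARD('a) - 1)) \<le> real (card {(a,b). X a \<omega> \<noteq> X b \<omega>})" by linarith
      then show "2 * (n - 1) \<le> (\<Sum>ab\<in>Off. indicator (D ab) \<omega> :: real)"
        using e N by (simp add: n_def of_nat_diff)
    qed
    then have "integral\<^sup>L M (\<lambda>_. 2 * (n - 1)) \<le> integral\<^sup>L M (\<lambda>\<omega>. \<Sum>ab\<in>Off. indicator (D ab) \<omega>)"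
      by (intro integral_mono_AE) (auto intro!: intg)
    then have "2 * (n - 1) \<le> (\<Sum>ab\<in>Off. measure M (D ab))" using eqs by (simp add: prob_space)
    with up show False by simp
  qed
  then obtain a b where ab: "a \<noteq> b" "measure M {\<omega> \<in> space M. X a \<omega> \<noteq> X b \<omega>} \<ge> 2 / n" by blast
  have tv: "tv_dist (pa a) (pa b) = 1 / (n - 1)"
  proof -
    have "(\<Sum>x\<in>UNIV. \<bar>pa a x - pa b x\<bar>) = (\<Sum>x\<in>{a,b}. \<bar>pa a x - pa b x\<bar>)"
      by (rule sum.mono_neutral_right) (auto simp: pa_def)
    also have "\<dots> = 2 / (n - 1)" using ab(1) n2 by (simp add: pa_def)
    finally show ?thesis by (simp add: tv_dist_def)
  qed
  have ne: "pa a \<noteq> pa b"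
  proof
    assume "pa a = pa b"
    then have "pa a a = pa b a" by simp
    then show False using ab(1) n2 by (simp add: pa_def)
  qed
  have "2 * (1 - 1 / real CARD('a)) * tv_dist (pa a) (pa b) = 2 / n"
    using n2 tv by (simp add: n_def[symmetric] field_simps)
  then show ?thesis using isp ne ab(2) unfolding X_def by metis
qed




lemma E_nth: "E a $ x = (if x = a then 1 else 0)"
  by (simp add: E_def axis_def)

lemma G_nth: "G p $ x = p x"
  by (simp add: G_def)

lemma two_point_Sa:
  fixes u v :: "'a::finite" and \<alpha> \<beta> :: real and s :: "real^'a"
  assumes uv: "u \<noteq> v" and ab: "0 < \<alpha>" "0 < \<beta>" "\<alpha> + \<beta> = 1"
    and p: "p = (\<lambda>x. if x = u then \<alpha> else if x = v then \<beta> else 0)"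
    and s0: "\<forall>x. 0 \<le> s$x" and s1: "(\<Sum>x\<in>UNIV. s$x) = 1"
  shows "s \<in> Sa u p \<longleftrightarrow> \<beta> * s$u \<le> \<alpha> * s$v"
proof
  assume "s \<in> Sa u p"
  moreover have "Sa u p \<subseteq> {s. \<beta> * s$u \<le> \<alpha> * s$v}"
    unfolding Sa_def
  proof (rule hull_minimal)
    show "insert (G p) {E b |b. b \<noteq> u} \<subseteq> {s. \<beta> * s $ u \<le> \<alpha> * s $ v}"
      using uv ab by (auto simp: G_nth E_nth p)
    show "convex {s. \<beta> * s $ u \<le> \<alpha> * s $ v}"
    proof (rule convexI)
      fix x y :: "real^'a" and t1 t2 :: real
      assume x: "x \<in> {s. \<beta> * s $ u \<le> \<alpha> * s $ v}" and y: "y \<in> {s. \<beta> * s $ u \<le> \<alpha> * s $ v}"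
        and t: "0 \<le> t1" "0 \<le> t2" "t1 + t2 = 1"
      have "t1 * (\<beta> * x $ u) \<le> t1 * (\<alpha> * x $ v)" using x t by (intro mult_left_mono) auto
      moreover have "t2 * (\<beta> * y $ u) \<le> t2 * (\<alpha> * y $ v)" using y t by (intro mult_left_mono) auto
      ultimately show "t1 *\<^sub>R x + t2 *\<^sub>R y \<in> {s. \<beta> * s $ u \<le> \<alpha> * s $ v}"
        by (simp add: algebra_simps)
    qed
  qed
  ultimately show "\<beta> * s$u \<le> \<alpha> * s$v" by blast
next
  assume h: "\<beta> * s$u \<le> \<alpha> * s$v"
  define l where "l = s$u / \<alpha>"
  define w where "w x = (if x = u then l else if x = v then s$v - l * \<beta> else s$x)" for x
  define y where "y x = (if x = u then G p else E x)" for x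
  have lb: "l * \<beta> \<le> s$v" using h ab by (simp add: l_def field_simps)
  have w0: "0 \<le> w x" for x using s0 lb ab by (auto simp: w_def l_def)
  have sumw: "(\<Sum>x\<in>UNIV. w x) = 1"
  proof -
    have "(\<Sum>x\<in>UNIV. w x) = (\<Sum>x\<in>UNIV. s$x) + (l - s$u) - l * \<beta>"
    proof -
      have "(\<Sum>x\<in>UNIV. w x) = (\<Sum>x\<in>UNIV. s$x + (if x = u then l - s$u else 0) + (if x = v then - (l * \<beta>) else 0))"
        by (rule sum.cong) (auto simp: w_def uv)
      also have "\<dots> = (\<Sum>x\<in>UNIV. s$x) + (l - s$u) - l * \<beta>"
        by (simp add: sum.distrib)
      finally show ?thesis .
    qed
    also have "\<dots> = 1"
    proof -
      have "l - s$u - l * \<beta> = l * (1 - \<beta>) - s$u" by (simp add: algebra_simps)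
      also have "1 - \<beta> = \<alpha>" using ab by simp
      also have "l * \<alpha> - s$u = 0" using ab by (simp add: l_def)
      finally show ?thesis using s1 by simp
    qed
    finally show ?thesis .
  qed
  have yin: "y x \<in> Sa u p" for x
    unfolding Sa_def y_def by (auto intro: hull_inc)
  have "(\<Sum>x\<in>UNIV. w x *\<^sub>R y x) \<in> Sa u p"
    unfolding Sa_def by (rule convex_sum) (use sumw w0 yin in \<open>auto simp: Sa_def\<close>)
  moreover have "(\<Sum>x\<in>UNIV. w x *\<^sub>R y x) = s"
  proof (subst vec_eq_iff, intro allI)
    fix k
    have "(\<Sum>x\<in>UNIV. w x *\<^sub>R y x) $ k = (\<Sum>x\<in>UNIV. w x * (y x $ k))" by simp
    also have "\<dots> = (\<Sum>x\<in>UNIV. (if x = u then l * p k else 0) + (if x = k then (if k = u then 0 else w k) else 0))"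
      by (rule sum.cong) (auto simp: y_def G_nth E_nth w_def)
    also have "\<dots> = l * p k + (if k = u then 0 else w k)"
      by (simp add: sum.distrib)
    also have "\<dots> = s $ k"
      using ab uv by (auto simp: p w_def l_def)
    finally show "(\<Sum>x\<in>UNIV. w x *\<^sub>R y x) $ k = s $ k" .
  qed
  ultimately show "s \<in> Sa u p" by simp
qed




lemma Sa_closed: "closed (Sa a p)"
  unfolding Sa_def
  by (intro compact_imp_closed compact_convex_hull finite_imp_compact) auto

lemma pred_Sa[measurable]: "Measurable.pred borel (\<lambda>s. s \<in> Sa a p)"
  using Sa_closed[of a p] by (simp add: pred_def borel_closed)

lemma g_eq_iff:
  fixes p :: "'a::{finite,linorder} \<Rightarrow> real"
  shows "g s p = a \<longleftrightarrow> (s \<in> Sa a p \<and> (\<forall>y. y < a \<longrightarrow> s \<notin> Sa y p)) \<or>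
      ((\<forall>x. s \<notin> Sa x p) \<and> (LEAST x::'a. False) = a)"
proof (cases "\<exists>x. s \<in> Sa x p")
  case True
  have "g s p = Min {x. s \<in> Sa x p}" unfolding g_def
    by (rule Least_Min) (use True in auto)
  moreover have "Min {x. s \<in> Sa x p} = a \<longleftrightarrow> (s \<in> Sa a p \<and> (\<forall>y. y < a \<longrightarrow> s \<notin> Sa y p))"
    using True by (subst Min_eq_iff) (auto simp: not_less[symmetric])
  ultimately show ?thesis using True by auto
next
  case False
  then have "g s p = (LEAST x::'a. False)" unfolding g_def by simp
  then show ?thesis using False by auto
qed

lemma g_ne_borel: "{s. g s p \<noteq> g s (q::'a::{finite,linorder} \<Rightarrow> real)} \<in> sets borel"
proof -
  have "{s. g s p \<noteq> g s q} = {s. \<exists>a. g s p = a \<and> \<not> g s q = a}" by auto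
  also have "\<dots> = {s. \<exists>a. ((s \<in> Sa a p \<and> (\<forall>y. y < a \<longrightarrow> s \<notin> Sa y p)) \<or>
      ((\<forall>x. s \<notin> Sa x p) \<and> (LEAST x::'a. False) = a)) \<and> \<not> ((s \<in> Sa a q \<and> (\<forall>y. y < a \<longrightarrow> s \<notin> Sa y q)) \<or>
      ((\<forall>x. s \<notin> Sa x q) \<and> (LEAST x::'a. False) = a))}"
    by (simp only: g_eq_iff)
  also have "\<dots> \<in> sets borel" by measurable
  finally show ?thesis .
qed






lemma lift_nth: "lift y $ a = (if a = a0 then 1 - (\<Sum>b\<in>UNIV - {a0}. y b) else y a)"
  by (simp add: lift_def)

lemma lift_measurable: "lift \<in> borel_measurable (chart_dom :: ('a::{finite,linorder} \<Rightarrow> real) measure)"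
proof (subst borel_measurable_euclidean_space, intro ballI)
  fix i :: "(real, 'a) vec" assume "i \<in> Basis"
  then obtain k where k: "i = axis k 1" by (auto simp: Basis_vec_def)
  have "(\<lambda>y. lift y \<bullet> i) = (\<lambda>y. if k = a0 then 1 - (\<Sum>b\<in>UNIV - {a0}. y b) else y k)"
    by (simp add: k inner_axis lift_nth)
  also have "\<dots> \<in> borel_measurable (chart_dom :: ('a::{finite,linorder} \<Rightarrow> real) measure)"
  proof (cases "k = a0")
    case True then show ?thesis unfolding chart_dom_def by (simp, measurable)
  next
    case False then show ?thesis unfolding chart_dom_def
      by simp
  qed
  finally show "(\<lambda>y. lift y \<bullet> i) \<in> borel_measurable chart_dom" .
qed

lemma chart_simplex_eq: "chart_simplex = {x. (\<forall>i\<in>UNIV - {a0}. 0 \<le> x i) \<and> sum x (UNIV - {a0}) \<le> 1} \<inter> space (chart_dom :: ('a::{finite,linorder} \<Rightarrow> real) measure)"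
  by (auto simp: chart_simplex_def)

lemma chart_simplex_sets: "chart_simplex \<in> sets (chart_dom :: ('a::{finite,linorder} \<Rightarrow> real) measure)"
  unfolding chart_simplex_def chart_dom_def by measurable

lemma chart_simplex_measure: "emeasure (chart_dom :: ('a::{finite,linorder} \<Rightarrow> real) measure) chart_simplex = ennreal (1 / fact (CARD('a) - 1))"
proof -
  have "emeasure (chart_dom :: ('a::{finite,linorder} \<Rightarrow> real) measure) chart_simplex = ennreal (1 ^ card (UNIV - {a0::'a}) / fact (card (UNIV - {a0::'a})))"
    unfolding chart_simplex_eq chart_dom_def by (rule emeasure_std_simplex_aux) auto
  also have "card (UNIV - {a0::'a}) = CARD('a) - 1" by (simp add: card_Diff_singleton)
  finally show ?thesis by simp
qed




lemma fubini_strip: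
  fixes I :: "'i set" and b c :: 'i and Pc :: "real set" and Iv :: "real \<Rightarrow> real set" and \<phi> :: real
  assumes fin: "finite I" and b: "b \<in> I" and c: "c \<noteq> b" "c \<in> I" and Pc: "Pc \<in> sets borel" and \<phi>: "0 \<le> \<phi>"
    and Ivm: "\<And>L. emeasure lborel (Iv L) = ennreal L" "\<And>L. Iv L \<in> sets borel"
    and meas: "Set \<in> sets (PiM I (\<lambda>_. lborel))"
    and SetD: "Set = {y \<in> space (PiM I (\<lambda>_. lborel)). (\<forall>x\<in>I-{b}. 0 \<le> y x) \<and> y c \<in> Pc \<and> y b \<in> Iv (\<phi> * (1 - (\<Sum>x\<in>I-{b}. y x)))}"
  shows "emeasure (PiM I (\<lambda>_. lborel)) Set = ennreal \<phi> * (\<integral>\<^sup>+x. indicator {x \<in> space (PiM (I-{b}) (\<lambda>_. lborel)). (\<forall>i\<in>I-{b}. 0 \<le> x i) \<and> x c \<in> Pc} x * ennreal (1 - (\<Sum>i\<in>I-{b}. x i)) \<partial>PiM (I-{b}) (\<lambda>_. lborel))"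
proof -
  interpret product_sigma_finite "\<lambda>_. lborel" by standard
  define J where "J = I - {b}"
  have IJ: "I = insert b J" using b by (auto simp: J_def)
  have finJ: "finite J" "b \<notin> J" using fin by (auto simp: J_def)
  define C where "C = {x \<in> space (PiM J (\<lambda>_. lborel)). (\<forall>i\<in>J. 0 \<le> x i) \<and> x c \<in> Pc}"
  have "emeasure (PiM I (\<lambda>_. lborel)) Set = \<integral>\<^sup>+ y. indicator Set y \<partial>PiM (insert b J) (\<lambda>_. lborel)"
    using meas IJ by (simp add: nn_integral_indicator)
  also have "\<dots> = \<integral>\<^sup>+ x. \<integral>\<^sup>+ t. indicator Set (x(b := t)) \<partial>lborel \<partial>PiM J (\<lambda>_. lborel)"
    by (rule product_nn_integral_insert[OF finJ]) (use meas IJ in simp)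
  also have "\<dots> = \<integral>\<^sup>+ x. indicator C x * ennreal (\<phi> * (1 - (\<Sum>i\<in>J. x i))) \<partial>PiM J (\<lambda>_. lborel)"
  proof (rule nn_integral_cong)
    fix x :: "'i \<Rightarrow> real" assume x: "x \<in> space (PiM J (\<lambda>_. lborel))"
    have sumeq: "(\<Sum>i\<in>J. if i = b then t else x i) = (\<Sum>i\<in>J. x i)" for t :: real
      using finJ by (intro sum.cong) auto
    have sp: "x(b := t) \<in> space (PiM I (\<lambda>_. lborel))" for t :: real
      using x IJ by (auto simp: space_PiM PiE_def extensional_def)
    have ind: "(indicator Set (x(b := t)) :: ennreal) = indicator C x * indicator (Iv (\<phi> * (1 - (\<Sum>i\<in>J. x i)))) t" for t :: real
      using sp[of t] x c finJ unfolding SetD C_def J_def[symmetric]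
      by (auto simp: indicator_def sumeq)
    have "(\<integral>\<^sup>+ t. indicator Set (x(b := t)) \<partial>lborel) = \<integral>\<^sup>+ t. indicator C x * indicator (Iv (\<phi> * (1 - (\<Sum>i\<in>J. x i)))) t \<partial>lborel"
      by (simp add: ind)
    also have "\<dots> = indicator C x * emeasure lborel (Iv (\<phi> * (1 - (\<Sum>i\<in>J. x i))))"
      using Ivm by (subst nn_integral_cmult) auto
    finally show "(\<integral>\<^sup>+ t. indicator Set (x(b := t)) \<partial>lborel) = indicator C x * ennreal (\<phi> * (1 - (\<Sum>i\<in>J. x i)))"
      using Ivm by simp
  qed
  also have "\<dots> = \<integral>\<^sup>+ x. ennreal \<phi> * (indicator C x * ennreal (1 - (\<Sum>i\<in>J. x i))) \<partial>PiM J (\<lambda>_. lborel)"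
    using \<phi> by (intro nn_integral_cong) (simp add: ennreal_mult' mult_ac)
  also have "\<dots> = ennreal \<phi> * \<integral>\<^sup>+ x. indicator C x * ennreal (1 - (\<Sum>i\<in>J. x i)) \<partial>PiM J (\<lambda>_. lborel)"
  proof (rule nn_integral_cmult)
    have cJ: "c \<in> J" using c by (simp add: J_def)
    have [measurable]: "Measurable.pred (PiM J (\<lambda>_. lborel)) (\<lambda>x. x c \<in> Pc)"
      unfolding pred_def
      using measurable_sets[OF measurable_component_singleton[OF cJ, of "\<lambda>_. lborel"], of Pc] Pc
      by (simp add: vimage_def Int_def conj_commute)
    have "C \<in> sets (PiM J (\<lambda>_. lborel))" unfolding C_def using finJ by measurable
    then show "(\<lambda>x. indicator C x * ennreal (1 - (\<Sum>i\<in>J. x i))) \<in> borel_measurable (PiM J (\<lambda>_. lborel))"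
      using finJ by measurable
  qed
  finally show ?thesis unfolding C_def J_def .
qed




lemma a0_le: "(a0::'a::{finite,linorder}) \<le> x"
  unfolding a0_def by (rule Min_le) auto

lemma g_a0_iff:
  fixes s :: "real^'a::{finite,linorder}" and v :: 'a
  assumes uv: "v \<noteq> a0" and ab: "0 < \<alpha>" "0 < \<beta>" "\<alpha> + \<beta> = 1"
    and p: "p = (\<lambda>x. if x = a0 then \<alpha> else if x = v then \<beta> else 0)"
    and s0: "\<forall>x. 0 \<le> s$x" and s1: "(\<Sum>x\<in>UNIV. s$x) = 1"
  shows "g s p = a0 \<longleftrightarrow> s \<in> Sa a0 p"
proof
  assume "s \<in> Sa a0 p"
  then show "g s p = a0" unfolding g_def by (rule Least_equality) (rule a0_le)
next
  assume g: "g s p = a0"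
  show "s \<in> Sa a0 p"
  proof (rule ccontr)
    assume ns: "s \<notin> Sa a0 p"
    have p': "p = (\<lambda>x. if x = v then \<beta> else if x = a0 then \<alpha> else 0)"
      using uv by (auto simp: p)
    have "\<not> \<beta> * s$a0 \<le> \<alpha> * s$v" using two_point_Sa[OF uv[symmetric] ab p s0 s1] ns by simp
    then have "\<alpha> * s$v \<le> \<beta> * s$a0" by simp
    then have sv: "s \<in> Sa v p"
      using two_point_Sa[OF uv ab(2,1) _ p' s0 s1] ab by simp
    have "g s p = Min {x. s \<in> Sa x p}" unfolding g_def
      by (rule Least_Min) (use sv in auto)
    moreover have "Min {x. s \<in> Sa x p} \<in> {x. s \<in> Sa x p}"
      by (rule Min_in) (use sv in auto)
    ultimately show False using g ns by simp
  qed
qed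




lemma part1:
  fixes c :: real
  assumes N: "CARD('a::{finite,linorder}) \<ge> 3" and c2: "c < 2"
  shows "\<exists>p q :: 'a \<Rightarrow> real. is_prob p \<and> is_prob q \<and> p \<noteq> q \<and>
              measure unifS {s. g s p \<noteq> g s q} > c * tv_dist p q"
proof -
  define I where "I = UNIV - {a0::'a}"
  let ?CD = "chart_dom :: ('a \<Rightarrow> real) measure"
  have CD: "?CD = PiM I (\<lambda>_. lborel)" by (simp add: chart_dom_def I_def)
  have finI: "finite I" by (simp add: I_def)
  have cardI: "card I \<ge> 2" using N by (simp add: I_def card_Diff_singleton)
  have "\<exists>b d. b \<in> I \<and> d \<in> I \<and> b \<noteq> d"
  proof (rule ccontr)
    assume "\<not> ?thesis"
    then have "card I \<le> Suc 0" by (subst card_le_Suc0_iff_eq[OF finI]) auto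
    then show False using cardI by simp
  qed
  then obtain b d where bd: "b \<in> I" "d \<in> I" "b \<noteq> d" by blast
  define Vr :: real where "Vr = 1 / fact (CARD('a) - 1)"
  have Vr0: "0 < Vr" by (simp add: Vr_def)
  have Vm: "emeasure ?CD chart_simplex = ennreal Vr"
    using chart_simplex_measure by (simp add: Vr_def)
  define \<epsilon> where "\<epsilon> = min (1/2) (Vr * (2 - c) / 4)"
  have \<epsilon>0: "0 < \<epsilon>" using Vr0 c2 by (simp add: \<epsilon>_def)
  have \<epsilon>1: "\<epsilon> \<le> 1/2" by (simp add: \<epsilon>_def)
  have \<epsilon>2: "\<epsilon> \<le> Vr * (2 - c) / 4" by (simp add: \<epsilon>_def)
  define p where "p x = (\<lambda>z. if z = a0 then 1 - \<epsilon> else if z = x then \<epsilon> else 0)" for x :: 'a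
  have Ico: "emeasure lborel {0..<L} = ennreal L" for L :: real
    by (cases "0 \<le> L") (auto simp: ennreal_neg)
  have Icc: "emeasure lborel {0..L} = ennreal L" for L :: real
    by (cases "0 \<le> L") (auto simp: ennreal_neg)
  have sumI: "(\<Sum>i\<in>I. y i) = y x + (\<Sum>i\<in>I-{x}. y i)" if "x \<in> I" for x and y :: "'a \<Rightarrow> real"
    using that finI by (simp add: sum.remove)
  define A where "A x = {y \<in> space ?CD. (\<forall>i\<in>I-{x}. 0 \<le> y i) \<and> 0 \<le> y x \<and> y x < \<epsilon> * (1 - (\<Sum>i\<in>I-{x}. y i))}" for x
  have Am: "A x \<in> sets ?CD" if "x \<in> I" for x unfolding A_def CD using finI that by measurable
  have simpm: "chart_simplex \<in> sets ?CD" by (rule chart_simplex_sets)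
  have Ameas: "emeasure ?CD (A x) = ennreal (\<epsilon> * Vr)" if x: "x \<in> I" and x': "x' \<in> I" "x' \<noteq> x" for x x'
  proof -
    define K where "K = (\<integral>\<^sup>+z. indicator {z \<in> space (PiM (I-{x}) (\<lambda>_. lborel)). (\<forall>i\<in>I-{x}. 0 \<le> z i) \<and> z x' \<in> UNIV} z * ennreal (1 - (\<Sum>i\<in>I-{x}. z i)) \<partial>PiM (I-{x}) (\<lambda>_. lborel))"
    have e1: "emeasure ?CD (A x) = ennreal \<epsilon> * K"
      unfolding CD K_def
      by (rule fubini_strip[OF finI x x'(2) x'(1) _ _ Ico]) (use \<epsilon>0 Am[OF x] in \<open>auto simp: CD A_def\<close>)
    have e2: "emeasure ?CD chart_simplex = ennreal 1 * K"
      unfolding CD K_def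
    proof (rule fubini_strip[OF finI x x'(2) x'(1) _ _ Icc])
      show "chart_simplex \<in> sets (PiM I (\<lambda>_. lborel))" using simpm CD by simp
      show "chart_simplex = {y \<in> space (Pi\<^sub>M I (\<lambda>_. lborel)). (\<forall>xa\<in>I - {x}. 0 \<le> y xa) \<and> y x' \<in> UNIV \<and> y x \<in> {0..1 * (1 - sum y (I - {x}))}}"
        unfolding chart_simplex_def chart_dom_def I_def[symmetric] using sumI[OF x] x
        by (auto simp: algebra_simps)
    qed auto
    have "K = ennreal Vr" using e2 Vm by simp
    then show ?thesis using e1 \<epsilon>0 by (simp add: ennreal_mult')
  qed
  define B where "B = {y \<in> space ?CD. (\<forall>i\<in>I-{b}. 0 \<le> y i) \<and> y d < \<epsilon> \<and> 0 \<le> y b \<and> y b < \<epsilon> * (1 - (\<Sum>i\<in>I-{b}. y i))}"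
  have Bm: "B \<in> sets ?CD" unfolding B_def CD using finI bd by measurable
  have Bmeas: "emeasure ?CD B \<le> ennreal (\<epsilon> * \<epsilon>)"
  proof -
    define J where "J = I - {b}"
    have dJ: "d \<in> J" using bd by (auto simp: J_def)
    have finJ: "finite J" using finI by (simp add: J_def)
    define C where "C = {z \<in> space (PiM J (\<lambda>_. lborel)). (\<forall>i\<in>J. 0 \<le> z i) \<and> z d \<in> {..<\<epsilon>}}"
    define K where "K = (\<integral>\<^sup>+z. indicator C z * ennreal (1 - (\<Sum>i\<in>J. z i)) \<partial>PiM J (\<lambda>_. lborel))"
    have e1: "emeasure ?CD B = ennreal \<epsilon> * K"
      unfolding CD K_def C_def J_def
      by (rule fubini_strip[OF finI bd(1) bd(3)[symmetric] bd(2) _ _ Ico]) (use \<epsilon>0 Bm in \<open>auto simp: CD B_def\<close>)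
    define Bx where "Bx j = (if j = d then {0..<\<epsilon>} else {0..1::real})" for j
    interpret product_sigma_finite "\<lambda>_. lborel" by standard
    have "K \<le> (\<integral>\<^sup>+z. indicator (PiE J Bx) z \<partial>PiM J (\<lambda>_. lborel))"
      unfolding K_def
    proof (rule nn_integral_mono)
      fix z :: "'a \<Rightarrow> real" assume z: "z \<in> space (PiM J (\<lambda>_. lborel))"
      show "indicator C z * ennreal (1 - sum z J) \<le> indicator (PiE J Bx) z"
      proof (cases "z \<in> C \<and> sum z J \<le> 1")
        case True
        then have nn: "\<forall>i\<in>J. 0 \<le> z i" and zd: "z d < \<epsilon>" and s1: "sum z J \<le> 1" by (auto simp: C_def)
        have "z i \<le> 1" if "i \<in> J" for i
          using member_le_sum[of i J z] nn that finJ s1 by auto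
        then have "z \<in> PiE J Bx" using z nn zd by (auto simp: space_PiM PiE_def Bx_def)
        then show ?thesis using True nn by (auto simp: indicator_def sum_nonneg)
      next
        case False
        then show ?thesis by (auto simp: indicator_def ennreal_neg)
      qed
    qed
    also have "\<dots> = emeasure (PiM J (\<lambda>_. lborel)) (PiE J Bx)"
      by (rule nn_integral_indicator) (auto intro!: sets_PiM_I_finite finJ simp: Bx_def)
    also have "\<dots> = (\<Prod>j\<in>J. emeasure lborel (Bx j))"
      by (rule emeasure_PiM[OF finJ]) (simp add: Bx_def)
    also have "\<dots> = (\<Prod>j\<in>J. if j = d then ennreal \<epsilon> else 1)"
      using \<epsilon>0 by (intro prod.cong) (auto simp: Bx_def)
    also have "\<dots> = ennreal \<epsilon>" using dJ finJ by simp
    finally have "K \<le> ennreal \<epsilon>" .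
    then have "emeasure ?CD B \<le> ennreal \<epsilon> * ennreal \<epsilon>" using e1 by (simp add: mult_left_mono)
    then show ?thesis using \<epsilon>0 by (simp add: ennreal_mult')
  qed
  have bI0: "x \<noteq> a0" if "x \<in> I" for x using that by (simp add: I_def)
  have pprob: "is_prob (p x)" if "x \<in> I" for x
  proof -
    have "(\<Sum>z\<in>UNIV. p x z) = (\<Sum>z\<in>{a0, x}. p x z)"
      by (rule sum.mono_neutral_right) (auto simp: p_def)
    also have "\<dots> = 1" using bI0[OF that] by (simp add: p_def)
    finally show ?thesis using \<epsilon>0 \<epsilon>1 unfolding is_prob_def by (auto simp: p_def)
  qed
  have liftp: "(\<forall>z. 0 \<le> lift y $ z) \<and> (\<Sum>z\<in>UNIV. lift y $ z) = 1" if y: "y \<in> chart_simplex" for y :: "'a \<Rightarrow> real"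
  proof -
    have nn: "\<forall>i\<in>I. 0 \<le> y i" and s1: "(\<Sum>i\<in>I. y i) \<le> 1"
      using y by (auto simp: chart_simplex_def I_def)
    have "(\<Sum>z\<in>UNIV. lift y $ z) = lift y $ a0 + (\<Sum>z\<in>I. lift y $ z)"
      unfolding I_def by (simp add: sum.remove)
    also have "(\<Sum>z\<in>I. lift y $ z) = (\<Sum>z\<in>I. y z)"
      by (rule sum.cong) (auto simp: lift_nth I_def)
    finally have "(\<Sum>z\<in>UNIV. lift y $ z) = 1" by (simp add: lift_nth I_def)
    moreover have "0 \<le> lift y $ z" for z
      using nn s1 by (auto simp: lift_nth I_def)
    ultimately show ?thesis by blast
  qed
  have Achar: "y \<in> A x \<longleftrightarrow> g (lift y) (p x) \<noteq> a0" if x: "x \<in> I" and y: "y \<in> chart_simplex" for x and y :: "'a \<Rightarrow> real"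
  proof -
    have ab: "0 < 1 - \<epsilon>" "0 < \<epsilon>" "(1 - \<epsilon>) + \<epsilon> = 1" using \<epsilon>0 \<epsilon>1 by auto
    have px: "p x = (\<lambda>z. if z = a0 then 1 - \<epsilon> else if z = x then \<epsilon> else 0)" by (simp add: p_def)
    have "g (lift y) (p x) = a0 \<longleftrightarrow> lift y \<in> Sa a0 (p x)"
      using g_a0_iff[OF bI0[OF x] ab px] liftp[OF y] by blast
    also have "\<dots> \<longleftrightarrow> \<epsilon> * lift y $ a0 \<le> (1 - \<epsilon>) * lift y $ x"
      using two_point_Sa[OF bI0[OF x, symmetric] ab px] liftp[OF y] by blast
    also have "\<dots> \<longleftrightarrow> \<epsilon> * (1 - (\<Sum>i\<in>I-{x}. y i)) \<le> y x"
      using bI0[OF x] sumI[OF x, of y] by (simp add: lift_nth I_def[symmetric] algebra_simps)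
    finally have e: "g (lift y) (p x) = a0 \<longleftrightarrow> \<epsilon> * (1 - (\<Sum>i\<in>I-{x}. y i)) \<le> y x" .
    have nn: "\<forall>i\<in>I. 0 \<le> y i" and ysp: "y \<in> space ?CD"
      using y by (auto simp: chart_simplex_def I_def)
    have "y \<in> A x \<longleftrightarrow> y x < \<epsilon> * (1 - (\<Sum>i\<in>I-{x}. y i))"
      using nn ysp x by (auto simp: A_def)
    then show ?thesis using e by linarith
  qed
  have Asub: "A x \<subseteq> chart_simplex" if x: "x \<in> I" for x
  proof
    fix y :: "'a \<Rightarrow> real" assume y: "y \<in> A x"
    have nn: "\<forall>i\<in>I. 0 \<le> y i" and yx: "y x < \<epsilon> * (1 - (\<Sum>i\<in>I-{x}. y i))" and ysp: "y \<in> space ?CD"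
      using y x by (auto simp: A_def)
    have "0 \<le> (\<Sum>i\<in>I-{x}. y i)" using nn by (auto intro: sum_nonneg)
    have "0 < 1 - (\<Sum>i\<in>I-{x}. y i)"
    proof (rule ccontr)
      assume "\<not> ?thesis"
      then have "\<epsilon> * (1 - (\<Sum>i\<in>I-{x}. y i)) \<le> 0" using \<epsilon>0 by (simp add: mult_nonneg_nonpos)
      then show False using yx nn x by auto
    qed
    then have "\<epsilon> * (1 - (\<Sum>i\<in>I-{x}. y i)) \<le> 1 * (1 - (\<Sum>i\<in>I-{x}. y i))"
      using \<epsilon>1 by (intro mult_right_mono) auto
    then have "y x < 1 * (1 - (\<Sum>i\<in>I-{x}. y i))" by (rule less_le_trans[OF yx])
    then have "y x \<le> 1 - (\<Sum>i\<in>I-{x}. y i)" by simp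
    then have "(\<Sum>i\<in>I. y i) \<le> 1" using sumI[OF x, of y] by simp
    then show "y \<in> chart_simplex" using nn ysp by (auto simp: chart_simplex_def I_def)
  qed
  define U where "U = uniform_measure ?CD chart_simplex"
  have Vne: "emeasure ?CD chart_simplex \<noteq> 0" "emeasure ?CD chart_simplex \<noteq> \<infinity>"
    using Vm Vr0 by auto
  interpret U: prob_space U unfolding U_def by (rule prob_space_uniform_measure[OF Vne])
  have mV: "measure ?CD chart_simplex = Vr" using Vm Vr0 by (simp add: measure_def)
  have mU: "measure U X = measure ?CD (chart_simplex \<inter> X) / Vr" if "X \<in> sets ?CD" for X
    unfolding U_def using measure_uniform_measure[OF Vne that] mV by simp
  define T where "T = {s. g s (p b) \<noteq> g s (p d)}"
  have Tb: "T \<in> sets borel" unfolding T_def by (rule g_ne_borel)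
  have liftU: "lift \<in> measurable U borel"
    using lift_measurable by (simp add: U_def measurable_cong_sets[OF sets_uniform_measure refl])
  have mT: "measure unifS T = measure U (lift -` T \<inter> space U)"
    unfolding unifS_def U_def[symmetric] by (rule measure_distr[OF liftU]) (simp add: Tb)
  have Tm: "lift -` T \<inter> space U \<in> sets U" using liftU Tb by (rule measurable_sets)
  have AmU: "A x \<in> sets U" if "x \<in> I" for x using Am[OF that] by (simp add: U_def)
  have sub: "(A b - A d) \<union> (A d - A b) \<subseteq> lift -` T \<inter> space U"
  proof
    fix y assume y: "y \<in> (A b - A d) \<union> (A d - A b)"
    then have ys: "y \<in> chart_simplex" using Asub bd by blast
    then have ysp: "y \<in> space U" using sets.sets_into_space[OF simpm] by (auto simp: U_def)
    have "g (lift y) (p b) \<noteq> g (lift y) (p d)"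
      using y Achar[OF bd(1) ys] Achar[OF bd(2) ys] by auto
    then show "y \<in> lift -` T \<inter> space U" using ysp by (simp add: T_def)
  qed
  have mA: "measure U (A x) = \<epsilon>" if x: "x \<in> I" "x' \<in> I" "x' \<noteq> x" for x x'
  proof -
    have "measure ?CD (A x) = \<epsilon> * Vr" using Ameas[OF x] \<epsilon>0 Vr0 by (simp add: measure_def)
    moreover have "chart_simplex \<inter> A x = A x" using Asub[OF x(1)] by blast
    ultimately show ?thesis using mU[OF Am[OF x(1)]] Vr0 by simp
  qed
  have mAB: "measure U (A b \<inter> A d) \<le> \<epsilon> * \<epsilon> / Vr"
  proof -
    have ABsub: "chart_simplex \<inter> (A b \<inter> A d) \<subseteq> B"
    proof
      fix y assume y: "y \<in> chart_simplex \<inter> (A b \<inter> A d)"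
      then have nn: "\<forall>i\<in>I-{d}. 0 \<le> y i" and yd: "y d < \<epsilon> * (1 - (\<Sum>i\<in>I-{d}. y i))"
        by (auto simp: A_def)
      have "0 \<le> (\<Sum>i\<in>I-{d}. y i)" using nn by (auto intro: sum_nonneg)
      then have "\<epsilon> * (1 - (\<Sum>i\<in>I-{d}. y i)) \<le> \<epsilon> * 1" using \<epsilon>0 by (intro mult_left_mono) auto
      then have "y d < \<epsilon>" using yd by simp
      then show "y \<in> B" using y by (auto simp: A_def B_def)
    qed
    have Bf: "B \<in> fmeasurable ?CD"
      using Bm Bmeas by (intro fmeasurableI) (auto simp: le_less_trans[OF _ ennreal_less_top])
    have "measure ?CD (chart_simplex \<inter> (A b \<inter> A d)) \<le> measure ?CD B"
      by (rule measure_mono_fmeasurable[OF ABsub _ Bf]) (use simpm Am bd in auto)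
    also have "measure ?CD B \<le> \<epsilon> * \<epsilon>"
    proof -
      have "enn2real (emeasure ?CD B) \<le> enn2real (ennreal (\<epsilon> * \<epsilon>))"
        by (rule enn2real_mono[OF Bmeas]) simp
      then show ?thesis using \<epsilon>0 by (simp add: measure_def)
    qed
    finally have "measure ?CD (chart_simplex \<inter> (A b \<inter> A d)) \<le> \<epsilon> * \<epsilon>" .
    then show ?thesis using mU[of "A b \<inter> A d"] Am bd Vr0 by (simp add: divide_right_mono)
  qed
  have "measure U ((A b - A d) \<union> (A d - A b)) = measure U (A b - A d) + measure U (A d - A b)"
    by (rule U.finite_measure_Union) (use AmU bd in auto)
  also have "\<dots> = (measure U (A b) - measure U (A b \<inter> A d)) + (measure U (A d) - measure U (A d \<inter> A b))"
    using AmU bd by (simp add: U.finite_measure_Diff')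
  also have "\<dots> = 2 * \<epsilon> - 2 * measure U (A b \<inter> A d)"
    using mA[OF bd(1) bd(2) bd(3)[symmetric]] mA[OF bd(2) bd(1) bd(3)] by (simp add: Int_commute)
  finally have eqU: "measure U ((A b - A d) \<union> (A d - A b)) = 2 * \<epsilon> - 2 * measure U (A b \<inter> A d)" .
  have "measure U ((A b - A d) \<union> (A d - A b)) \<le> measure U (lift -` T \<inter> space U)"
    by (rule U.finite_measure_mono[OF sub Tm])
  then have lowT: "2 * \<epsilon> - 2 * (\<epsilon> * \<epsilon> / Vr) \<le> measure unifS T"
    using eqU mAB mT by linarith
  have tv: "tv_dist (p b) (p d) = \<epsilon>"
  proof -
    have "(\<Sum>z\<in>UNIV. \<bar>p b z - p d z\<bar>) = (\<Sum>z\<in>{b,d}. \<bar>p b z - p d z\<bar>)"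
      by (rule sum.mono_neutral_right) (auto simp: p_def)
    also have "\<dots> = 2 * \<epsilon>" using bd bI0 \<epsilon>0 by (simp add: p_def)
    finally show ?thesis by (simp add: tv_dist_def)
  qed
  have pne: "p b \<noteq> p d"
  proof
    assume "p b = p d"
    then have "p b b = p d b" by simp
    then show False using bd bI0 \<epsilon>0 by (simp add: p_def)
  qed
  have arith: "c * \<epsilon> < 2 * \<epsilon> - 2 * (\<epsilon> * \<epsilon> / Vr)"
  proof -
    have e1: "2 * (\<epsilon> * \<epsilon> / Vr) = \<epsilon> * (2 * \<epsilon> / Vr)" by simp
    have "2 * \<epsilon> / Vr \<le> (2 - c) / 2"
      using \<epsilon>2 Vr0 by (simp add: divide_simps mult.commute)
    then have e2: "\<epsilon> * (2 * \<epsilon> / Vr) \<le> \<epsilon> * ((2 - c) / 2)" using \<epsilon>0 by (intro mult_left_mono) auto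
    have "\<epsilon> * c < \<epsilon> * 2" using \<epsilon>0 c2 by simp
    moreover have "\<epsilon> * ((2 - c) / 2) = \<epsilon> - (\<epsilon> * c) / 2" by (simp add: field_simps)
    ultimately have e3: "\<epsilon> * ((2 - c) / 2) < 2 * \<epsilon> - c * \<epsilon>" by (simp add: mult.commute)
    show ?thesis using e1 e2 e3 by linarith
  qed
  show ?thesis
    using pprob[OF bd(1)] pprob[OF bd(2)] pne lowT arith tv unfolding T_def
    by (intro exI[of _ "p b"] exI[of _ "p d"]) (simp add: mult.commute)

qed



theorem proposition10:
  shows "(CARD('a::{finite,linorder}) \<ge> 3 \<longrightarrow>
           (\<forall>c < 2. \<exists>p q :: 'a \<Rightarrow> real. is_prob p \<and> is_prob q \<and> p \<noteq> q \<and>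
              measure unifS {s. g s p \<noteq> g s q} > c * tv_dist p q))
       \<and> (CARD('a) \<ge> 2 \<longrightarrow>
           (\<forall>(M :: 'b measure) (Z :: ('a \<Rightarrow> real) \<Rightarrow> 'b \<Rightarrow> 'a).
              prob_space M \<and>
              (\<forall>p. is_prob p \<longrightarrow> Z p \<in> measurable M (count_space UNIV) \<and>
                     (\<forall>a. measure M {\<omega> \<in> space M. Z p \<omega> = a} = p a))
              \<longrightarrow> (\<exists>p q. is_prob p \<and> is_prob q \<and> p \<noteq> q \<and>
                     measure M {\<omega> \<in> space M. Z p \<omega> \<noteq> Z q \<omega>}
                       \<ge> 2 * (1 - 1 / real CARD('a)) * tv_dist p q)))"
proof (intro conjI impI allI)
  fix c :: real assume h: "CARD('a) \<ge> 3" "c < 2"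
  show "\<exists>p q :: 'a \<Rightarrow> real. is_prob p \<and> is_prob q \<and> p \<noteq> q \<and>
              measure unifS {s. g s p \<noteq> g s q} > c * tv_dist p q"
    by (rule part1[OF h])
next
  fix M :: "'b measure" and Z :: "('a \<Rightarrow> real) \<Rightarrow> 'b \<Rightarrow> 'a"
  assume N: "CARD('a) \<ge> 2" and h: "prob_space M \<and>
              (\<forall>p. is_prob p \<longrightarrow> Z p \<in> measurable M (count_space UNIV) \<and>
                     (\<forall>a. measure M {\<omega> \<in> space M. Z p \<omega> = a} = p a))"
  show "\<exists>p q. is_prob p \<and> is_prob q \<and> p \<noteq> q \<and>
                     measure M {\<omega> \<in> space M. Z p \<omega> \<noteq> Z q \<omega>}
                       \<ge> 2 * (1 - 1 / real CARD('a)) * tv_dist p q"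
    using h by (intro part2[OF N]) auto
qed


end
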